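(* Let $q$ be a prime power, $\xi$ a generator of the cyclic group $\mathbb{F}_q^*$, and $t\ge 2$ an integer. Let $A'_{t,q}$ be the $t\times\big(\binom{t}{2}(q-1)+t+q-2\big)$ matrix obtained from $A_{t,q}$ by appending $q-2$ columns whose first entries are $\xi,\xi^2,\dots,\xi^{q-2}$ respectively and whose other entries are $0$. Then the linear code $\mathcal{C}'$ generated by $A'_{t,q}$ is a minimal $\big[\binom{t}{2}(q-1)+t+q-2,\,t\big]_q$ code satisfying Property (P).
   Context: $A_{t,q}=(\mathbb{I}_t\mid \mathbb{B}_{t,q})$ is the $t\times\big(t+\binom{t}{2}(q-1)\big)$ matrix over $\mathbb{F}_q$, where $\mathbb{I}_t$ is the identity matrix and $\mathbb{B}_{t,q}$ has as columns exactly the vectors $e_i+\lambda e_j$, one for each pair $1\le i<j\le t$ and each $\lambda\in\mathbb{F}_q^*$. The code generated by a matrix is its row space. Property (P): every nonzero codeword $w=(w_1,\dots,w_n)$ satisfies $\{w_1,\dots,w_n\}=\mathbb{F}_q$. A linear code $\mathcal{C}$ is minimal if for all nonzero $c,c'\in\mathcal{C}$ whose supports (sets of nonzero coordinate indices) satisfy $\mathrm{Supp}(c')\subseteq\mathrm{Supp}(c)$, there is $\lambda\in\mathbb{F}_q^*$ with $c'=\lambda c$. *)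

theory Defs
  imports Main
begin

text \<open>Vectors in F_q^t are functions nat => 'a, only indices below t being relevant.
  A t x n matrix is represented by the list of its n columns.\<close>

definition unit_vec :: "nat \<Rightarrow> nat \<Rightarrow> 'a::zero_neq_one" where
  "unit_vec i = (\<lambda>k. if k = i then 1 else 0)"

definition codeword :: "nat \<Rightarrow> (nat \<Rightarrow> 'a::comm_semiring_1) list \<Rightarrow> (nat \<Rightarrow> 'a) \<Rightarrow> 'a list" where
  "codeword t cols m = map (\<lambda>c. \<Sum>i<t. m i * c i) cols"

definition gen_code :: "nat \<Rightarrow> (nat \<Rightarrow> 'a::comm_semiring_1) list \<Rightarrow> 'a list set" where
  "gen_code t cols = range (codeword t cols)"

definition supp :: "'a::zero list \<Rightarrow> nat set" where
  "supp w = {k. k < length w \<and> w ! k \<noteq> 0}"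

definition minimal_code :: "'a::field list set \<Rightarrow> bool" where
  "minimal_code C \<longleftrightarrow> (\<forall>c\<in>C. \<forall>c'\<in>C. supp c \<noteq> {} \<and> supp c' \<noteq> {} \<and> supp c' \<subseteq> supp c
      \<longrightarrow> (\<exists>l. l \<noteq> 0 \<and> c' = map (\<lambda>x. l * x) c))"

definition property_P :: "'a::zero list set \<Rightarrow> bool" where
  "property_P C \<longleftrightarrow> (\<forall>w\<in>C. supp w \<noteq> {} \<longrightarrow> set w = UNIV)"

text \<open>The set of columns of B_{t,q}: e_i + lambda e_j, i<j, lambda nonzero (0-based indices).\<close>
definition B_col_set :: "nat \<Rightarrow> (nat \<Rightarrow> 'a::field) set" where
  "B_col_set t = {(\<lambda>k. unit_vec i k + l * unit_vec j k) | i j l. i < j \<and> j < t \<and> l \<noteq> 0}"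

text \<open>Columns of A'_{t,q} = (I_t | B | xi e_1 ... xi^(q-2) e_1), given a column listing B of B_{t,q}.\<close>
definition A'_cols :: "nat \<Rightarrow> (nat \<Rightarrow> 'a::{field,finite}) list \<Rightarrow> 'a \<Rightarrow> (nat \<Rightarrow> 'a) list" where
  "A'_cols t B \<xi> = map unit_vec [0..<t] @ B @ map (\<lambda>j k. \<xi> ^ j * unit_vec 0 k) [1..<card (UNIV::'a set) - 1]"

end

theory Submission
  imports Defs
begin

lemma dot_unit: "j < t \<Longrightarrow> (\<Sum>i<t. m i * unit_vec j i) = (m j :: 'a::field)"
  by (simp add: unit_vec_def if_distrib cong: if_cong)

lemma dot_B:
  assumes "a < t" "b < t"
  shows "(\<Sum>i<t. m i * (unit_vec a i + l * unit_vec b i)) = m a + l * (m b :: 'a::field)"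
proof -
  have "(\<Sum>i<t. m i * (unit_vec a i + l * unit_vec b i)) = (\<Sum>i<t. m i * unit_vec a i) + l * (\<Sum>i<t. m i * unit_vec b i)"
    by (simp add: distrib_left sum.distrib sum_distrib_left mult.left_commute)
  then show ?thesis using dot_unit[of a t m] dot_unit[of b t m] assms by simp
qed

lemma dot_pow: "0 < t \<Longrightarrow> (\<Sum>i<t. m i * (x ^ j * unit_vec 0 i)) = x ^ j * (m 0 :: 'a::field)"
  by (simp add: unit_vec_def if_distrib cong: if_cong)

lemma fermat_fin: fixes x :: "'a::{field,finite}" assumes "x \<noteq> 0"
  shows "x ^ (card (UNIV::'a set) - 1) = 1"
proof -
  let ?S = "UNIV - {0::'a}"
  have bij: "bij_betw (\<lambda>y. x * y) ?S ?S"
    unfolding bij_betw_def inj_on_def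
  proof (intro conjI ballI impI)
    show "(*) x ` ?S = ?S"
    proof
      show "?S \<subseteq> (*) x ` ?S"
      proof
        fix y assume "y \<in> ?S" then show "y \<in> (*) x ` ?S" using assms by (intro image_eqI[of _ _ "y / x"]) auto
      qed
    qed (use assms in auto)
  qed (use assms in auto)
  have "prod (\<lambda>y. x * y) ?S = prod id ?S"
    using prod.reindex_bij_betw[OF bij, of id] by simp
  moreover have "prod (\<lambda>y. x * y) ?S = x ^ card ?S * prod id ?S"
    by (simp add: prod.distrib)
  moreover have "prod id ?S \<noteq> 0" by simp
  moreover have "card ?S = card (UNIV::'a set) - 1" by (simp add: card_Diff_subset)
  ultimately show ?thesis by simp
qed

lemma card_pairs: "card {(i,j). i < j \<and> j < (t::nat)} = t choose 2"
proof (induction t)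
  case 0 then show ?case by simp
next
  case (Suc t)
  have e: "{(i,j). i < j \<and> j < Suc t} = {(i,j). i < j \<and> j < t} \<union> (\<lambda>i. (i,t)) ` {..<t}"
    by auto
  have "finite {(i,j). i < j \<and> j < (t::nat)}"
    by (rule finite_subset[of _ "{..<t} \<times> {..<t}"]) auto
  have c: "card ((\<lambda>i. (i,t)) ` {..<t}) = t" by (simp add: card_image inj_on_def)
  have "card {(i,j). i < j \<and> j < Suc t} = (t choose 2) + t"
  proof -
    have "card ({(i,j). i < j \<and> j < t} \<union> (\<lambda>i. (i,t)) ` {..<t}) = card {(i,j). i < j \<and> j < (t::nat)} + card ((\<lambda>i. (i,t)) ` {..<t})"
      by (rule card_Un_disjoint) (use \<open>finite {(i,j). i < j \<and> j < (t::nat)}\<close> in auto)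
    then show ?thesis using e c Suc by simp
  qed
  then show ?case by (simp add: numeral_2_eq_2)
qed

lemma supp_B: fixes l :: "'a::field" assumes "i < j" "l \<noteq> 0"
  shows "{k. unit_vec i k + l * unit_vec j k \<noteq> 0} = {i,j}"
  using assms by (auto simp: unit_vec_def)

lemma card_B: "card (B_col_set t :: (nat \<Rightarrow> 'a::{field,finite}) set) = (t choose 2) * (card (UNIV::'a set) - 1)"
proof -
  define g where "g = (\<lambda>((i,j),l) (k::nat). unit_vec i k + (l::'a) * unit_vec j k)"
  define P where "P = {(i,j). i < j \<and> j < (t::nat)}"
  have fP: "finite P" unfolding P_def by (rule finite_subset[of _ "{..<t} \<times> {..<t}"]) auto
  have eq: "B_col_set t = g ` (P \<times> (UNIV - {0}))"
  proof
    show "B_col_set t \<subseteq> g ` (P \<times> (UNIV - {0}))"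
    proof
      fix x :: "nat \<Rightarrow> 'a" assume "x \<in> B_col_set t"
      then obtain i j l where x: "x = (\<lambda>k. unit_vec i k + l * unit_vec j k)" "i < j" "j < t" "(l::'a) \<noteq> 0"
        unfolding B_col_set_def by blast
      show "x \<in> g ` (P \<times> (UNIV - {0}))"
        by (rule image_eqI[of _ _ "((i,j),l)"]) (use x in \<open>auto simp: g_def P_def\<close>)
    qed
    show "g ` (P \<times> (UNIV - {0})) \<subseteq> B_col_set t"
      unfolding B_col_set_def g_def P_def by fastforce
  qed
  have inj: "inj_on g (P \<times> (UNIV - {0}))"
  proof (rule inj_onI)
    fix x y assume xd: "x \<in> P \<times> (UNIV - {0})" and yd: "y \<in> P \<times> (UNIV - {0})" and exy: "g x = g y"
    obtain i j l where x: "x = ((i,j),l)" by (metis prod.exhaust)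
    obtain i' j' l' where y: "y = ((i',j'),l')" by (metis prod.exhaust)
    have a: "(i,j) \<in> P" "(i',j') \<in> P" "(l::'a) \<noteq> 0" "l' \<noteq> 0" using xd yd x y by auto
    have e: "g ((i,j),l) = g ((i',j'),l')" using exy x y by simp
    have ij: "i < j" "i' < j'" using a unfolding P_def by auto
    have "{k. g ((i,j),l) k \<noteq> 0} = {i,j}" using supp_B[OF ij(1) a(3)] unfolding g_def by simp
    moreover have "{k. g ((i',j'),l') k \<noteq> 0} = {i',j'}" using supp_B[OF ij(2) a(4)] unfolding g_def by simp
    ultimately have "{i,j} = {i',j'}" using e by simp
    then have ii: "i = i' \<and> j = j'" using ij by (auto simp: doubleton_eq_iff)
    have h1: "g ((i,j),l) j = l" and h2: "g ((i',j'),l') j' = l'" using ij unfolding g_def by (auto simp: unit_vec_def)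
    have jj: "j' = j" using ii by simp
    have "l = g ((i,j),l) j" using h1 by simp
    also have "\<dots> = g ((i',j'),l') j'" unfolding e jj ..
    also have "\<dots> = l'" using h2 .
    finally show "x = y" using ii x y by simp
  qed
  have "card (B_col_set t :: (nat \<Rightarrow> 'a) set) = card P * card (UNIV - {0::'a})"
    unfolding eq by (simp add: card_image[OF inj] card_cartesian_product)
  moreover have "card P = t choose 2" unfolding P_def using card_pairs by simp
  moreover have "card (UNIV - {0::'a}) = card (UNIV::'a set) - 1" by (simp add: card_Diff_subset)
  ultimately show ?thesis by simp
qed

lemma card_ge2: "card (UNIV::'a::{field,finite} set) \<ge> 2"
proof -
  have "card {0::'a, 1} \<le> card (UNIV::'a set)" by (rule card_mono) auto
  then show ?thesis by simp
qed

lemma codeword_take: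
  assumes "cols = map unit_vec [0..<t] @ rest"
  shows "take t (codeword t cols (m :: nat \<Rightarrow> 'a::field)) = map m [0..<t]"
  using assms by (simp add: codeword_def dot_unit)

lemma codeword_eq:
  assumes "\<forall>i<t. m i = m' i"
  shows "codeword t cols m = codeword t cols (m' :: nat \<Rightarrow> 'a::field)"
  unfolding codeword_def using assms by (auto intro!: sum.cong)

lemma card_code:
  fixes cols :: "(nat \<Rightarrow> 'a::{field,finite}) list"
  assumes "cols = map unit_vec [0..<t] @ rest"
  shows "card (gen_code t cols) = card (UNIV::'a set) ^ t"
proof -
  let ?C = "gen_code t (cols :: (nat \<Rightarrow> 'a) list)"
  have inj: "inj_on (take t) ?C"
  proof (rule inj_onI)
    fix x y assume "x \<in> ?C" "y \<in> ?C" "take t x = take t y"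
    then obtain m m' where mm: "x = codeword t cols m" "y = codeword t cols m'"
      "map m [0..<t] = map m' [0..<t]"
      unfolding gen_code_def using codeword_take[OF assms] by auto
    then have "\<forall>i<t. m i = m' i" by (simp add: map_eq_conv)
    then show "x = y" using mm codeword_eq by metis
  qed
  have img: "take t ` ?C = {xs. set xs \<subseteq> UNIV \<and> length xs = t}"
  proof
    show "take t ` ?C \<subseteq> {xs. set xs \<subseteq> UNIV \<and> length xs = t}"
      unfolding gen_code_def using codeword_take[OF assms] by auto
    show "{xs. set xs \<subseteq> UNIV \<and> length xs = t} \<subseteq> take t ` ?C"
    proof
      fix xs :: "'a list" assume "xs \<in> {xs. set xs \<subseteq> UNIV \<and> length xs = t}"
      then have l: "length xs = t" by simp
      have "take t (codeword t cols (nth xs)) = xs"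
        using codeword_take[OF assms] l by (metis map_nth)
      then show "xs \<in> take t ` ?C" unfolding gen_code_def by (metis rangeI image_eqI)
    qed
  qed
  have "card ?C = card (take t ` ?C)" by (simp add: card_image[OF inj])
  also have "\<dots> = card (UNIV::'a set) ^ t" unfolding img by (rule card_lists_length_eq) simp
  finally show ?thesis .
qed

lemma supp_nonzero:
  assumes "supp (codeword t cols m) \<noteq> {}"
  shows "\<exists>i<t. (m i :: 'a::field) \<noteq> 0"
proof (rule ccontr)
  assume "\<not> ?thesis"
  then have "\<forall>v. (\<Sum>i<t. m i * v i) = 0" by simp
  then show False using assms unfolding supp_def codeword_def by auto
qed

lemma in_codeword: "x \<in> set (codeword t cols m) \<longleftrightarrow> (\<exists>v\<in>set cols. (\<Sum>i<t. m i * v i) = x)"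
  unfolding codeword_def by auto

theorem mainTheorem7:
  fixes \<xi> :: "'a::{field,finite}" and t :: nat and B :: "(nat \<Rightarrow> 'a) list"
  assumes gen: "\<xi> \<noteq> 0" "\<forall>x::'a. x \<noteq> 0 \<longrightarrow> (\<exists>k::nat. x = \<xi> ^ k)"
    and t: "t \<ge> 2"
    and B: "distinct B" "set B = B_col_set t"
  shows "length (A'_cols t B \<xi>) = (t choose 2) * (card (UNIV::'a set) - 1) + t + card (UNIV::'a set) - 2
    \<and> card (gen_code t (A'_cols t B \<xi>)) = card (UNIV::'a set) ^ t
    \<and> minimal_code (gen_code t (A'_cols t B \<xi>))
    \<and> property_P (gen_code t (A'_cols t B \<xi>))"
proof -
  define q where "q = card (UNIV::'a set)"
  define cols where "cols = A'_cols t B \<xi>"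
  have q2: "q \<ge> 2" unfolding q_def by (rule card_ge2)
  have cols_eq: "cols = map unit_vec [0..<t] @ (B @ map (\<lambda>j k. \<xi> ^ j * unit_vec 0 k) [1..<q - 1])"
    unfolding cols_def A'_cols_def q_def by simp
  have cU: "unit_vec i \<in> set cols" if "i < t" for i
    using that unfolding cols_eq by auto
  have cB: "(\<lambda>k. unit_vec a k + l * unit_vec b k) \<in> set cols" if "a < b" "b < t" "l \<noteq> 0" for a b l
  proof -
    have "(\<lambda>k. unit_vec a k + l * unit_vec b k) \<in> B_col_set t"
      unfolding B_col_set_def using that by blast
    then show ?thesis using B(2) unfolding cols_eq by auto
  qed
  have cP: "(\<lambda>k. \<xi> ^ j * unit_vec 0 k) \<in> set cols" if "1 \<le> j" "j < q - 1" for j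
    using that unfolding cols_eq by auto
  have len: "length cols = (t choose 2) * (q - 1) + t + q - 2"
  proof -
    have "length B = (t choose 2) * (q - 1)"
      using distinct_card[OF B(1)] B(2) card_B[where 'a='a] unfolding q_def by simp
    then show ?thesis unfolding cols_eq using q2 by simp
  qed
  have card: "card (gen_code t cols) = q ^ t"
    unfolding q_def by (rule card_code[OF cols_eq])
  have ferm: "\<exists>k<q - 1. y = \<xi> ^ k" if ynz: "y \<noteq> 0" for y
  proof -
    obtain k where k: "y = \<xi> ^ k" using gen(2) ynz by blast
    have "\<xi> ^ k = \<xi> ^ ((q - 1) * (k div (q - 1)) + k mod (q - 1))" using div_mult_mod_eq[of k "q - 1"] by (simp add: mult.commute)
    also have "\<dots> = (\<xi> ^ (q - 1)) ^ (k div (q - 1)) * \<xi> ^ (k mod (q - 1))"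
      by (simp only: power_add power_mult)
    also have "\<dots> = \<xi> ^ (k mod (q - 1))" using fermat_fin[OF gen(1)] unfolding q_def by simp
    finally show ?thesis using k q2 by (intro exI[of _ "k mod (q - 1)"]) auto
  qed
  have P: "property_P (gen_code t cols)"
    unfolding property_P_def gen_code_def
  proof (clarify)
    fix m :: "nat \<Rightarrow> 'a"
    assume ne: "supp (codeword t cols m) \<noteq> {}"
    obtain i where i: "i < t" "m i \<noteq> 0" using supp_nonzero[OF ne] by blast
    have "\<exists>v\<in>set cols. (\<Sum>k<t. m k * v k) = x" for x
    proof (cases "\<exists>j<t. j \<noteq> i \<and> m j \<noteq> 0")
      case True
      then obtain j where j: "j < t" "j \<noteq> i" "m j \<noteq> 0" by blast
      define a where "a = min i j"
      define b where "b = max i j"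
      have ab: "a < b" "b < t" "m a \<noteq> 0" "m b \<noteq> 0"
        using i j unfolding a_def b_def by (auto simp: min_def max_def)
      show ?thesis
      proof (cases "x = m a")
        case True
        then show ?thesis using cU[of a] ab dot_unit[of a t m] by (intro bexI[of _ "unit_vec a"]) auto
      next
        case False
        define l where "l = (x - m a) / m b"
        have l: "l \<noteq> 0" using False ab unfolding l_def by auto
        have "(\<Sum>k<t. m k * (unit_vec a k + l * unit_vec b k)) = x"
          using dot_B[of a t b m l] ab unfolding l_def by simp
        then show ?thesis using cB[OF ab(1,2) l] by (intro bexI[of _ "\<lambda>k. unit_vec a k + l * unit_vec b k"]) auto
      qed
    next
      case False
      then have z: "\<forall>j<t. j \<noteq> i \<longrightarrow> m j = 0" by blast
      show ?thesis
      proof (cases "x = 0")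
        case True
        define j where "j = (if i = 0 then 1 else (0::nat))"
        have j: "j < t" "j \<noteq> i" using t unfolding j_def by auto
        show ?thesis using cU[OF j(1)] dot_unit[of j t m] z j True by (intro bexI[of _ "unit_vec j"]) auto
      next
        case xnz: False
        show ?thesis
        proof (cases "i = 0")
          case True
          obtain k where k: "k < q - 1" "x / m 0 = \<xi> ^ k"
            using ferm[of "x / m 0"] xnz i True by auto
          show ?thesis
          proof (cases "k = 0")
            case True
            then have "x = m 0" using k i \<open>i = 0\<close> by (simp add: field_simps)
            then show ?thesis using cU[of 0] t dot_unit[of 0 t m] by (intro bexI[of _ "unit_vec 0"]) auto
          next
            case False
            have "(\<Sum>k'<t. m k' * (\<xi> ^ k * unit_vec 0 k')) = x"
              using dot_pow[of t m \<xi> k] t k i \<open>i = 0\<close> by (simp add: field_simps)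
            then show ?thesis using cP[of k] False k by (intro bexI[of _ "\<lambda>k'. \<xi> ^ k * unit_vec 0 k'"]) auto
          qed
        next
          case False
          define l where "l = x / m i"
          have l: "l \<noteq> 0" using xnz i unfolding l_def by auto
          have "(\<Sum>k<t. m k * (unit_vec 0 k + l * unit_vec i k)) = x"
            using dot_B[of 0 t i m l] i False z unfolding l_def by simp
          then show ?thesis using cB[of 0 i l] l i False by (intro bexI[of _ "\<lambda>k. unit_vec 0 k + l * unit_vec i k"]) auto
        qed
      qed
    qed
    then show "set (codeword t cols m) = UNIV" by (auto simp: in_codeword)
  qed
  have M: "minimal_code (gen_code t cols)"
    unfolding minimal_code_def gen_code_def
  proof (clarify)
    fix m m' :: "nat \<Rightarrow> 'a"
    let ?c = "codeword t cols m" and ?c' = "codeword t cols m'"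
    assume ne: "supp ?c \<noteq> {}" and ne': "supp ?c' \<noteq> {}" and sub: "supp ?c' \<subseteq> supp ?c"
    have Z: "(\<Sum>k<t. m' k * v k) = 0" if vh: "v \<in> set cols" "(\<Sum>k<t. m k * v k) = 0" for v
    proof (rule ccontr)
      assume nz: "(\<Sum>k<t. m' k * v k) \<noteq> 0"
      obtain n where n: "n < length cols" "cols ! n = v" using vh(1) by (auto simp: in_set_conv_nth)
      have "n \<in> supp ?c'" using n nz unfolding supp_def codeword_def by auto
      then have "n \<in> supp ?c" using sub by blast
      then show False using n vh(2) unfolding supp_def codeword_def by auto
    qed
    have pair: "m' a * m b = m a * m' b" if "a < b" "b < t" for a b
    proof -
      consider "m a = 0" | "m b = 0" | "m a \<noteq> 0" "m b \<noteq> 0" by blast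
      then show ?thesis
      proof cases
        case 1
        then have "m' a = 0" using Z[OF cU[of a]] dot_unit[of a t m] dot_unit[of a t m'] that by simp
        then show ?thesis using 1 by simp
      next
        case 2
        then have "m' b = 0" using Z[OF cU[of b]] dot_unit[of b t m] dot_unit[of b t m'] that by simp
        then show ?thesis using 2 by simp
      next
        case 3
        define l where "l = - (m a / m b)"
        have l: "l \<noteq> 0" using 3 unfolding l_def by auto
        have "(\<Sum>k<t. m k * (unit_vec a k + l * unit_vec b k)) = 0"
          using dot_B[of a t b m l] that 3 unfolding l_def by simp
        then have "(\<Sum>k<t. m' k * (unit_vec a k + l * unit_vec b k)) = 0"
          using Z[OF cB[OF that l]] by simp
        then have "m' a + l * m' b = 0" using dot_B[of a t b m' l] that by simp
        then show ?thesis using 3 unfolding l_def by (simp add: field_simps)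
      qed
    qed
    have pair': "m' a * m b = m a * m' b" if "a < t" "b < t" for a b
    proof -
      consider "a < b" | "a = b" | "b < a" by linarith
      then show ?thesis
      proof cases
        case 3 then show ?thesis using pair[of b a] that by (simp add: mult.commute)
      qed (use pair that in auto)
    qed
    obtain i where i: "i < t" "m i \<noteq> 0" using supp_nonzero[OF ne] by blast
    define lam where "lam = m' i / m i"
    have ml: "m' j = lam * m j" if "j < t" for j
      using pair'[OF i(1) that] i unfolding lam_def by (simp add: field_simps)
    have "lam \<noteq> 0"
    proof
      assume "lam = 0"
      then show False using supp_nonzero[OF ne'] ml by auto
    qed
    moreover have "?c' = map (\<lambda>x. lam * x) ?c"
      unfolding codeword_def using ml by (auto simp: sum_distrib_left mult.assoc intro!: sum.cong)
    ultimately show "\<exists>l. l \<noteq> 0 \<and> ?c' = map (\<lambda>x. l * x) ?c" by blast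
  qed
  show ?thesis using len card P M unfolding cols_def q_def by simp
qed

end
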